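(* Let $p,q$ be distinct odd primes with $p\equiv 1\pmod 4$, $q\equiv 3\pmod 4$, $\gcd(p-1,q-1)=2$, having a common primitive root $g$, and satisfying $|q-p|<\sqrt{pq}-1$. Let $s$ be the balanced Whiteman generalized cyclotomic sequence of period $N=pq$ defined in the context. Then its 2-adic complexity satisfies $\varphi_2(s)\ge pq-p-q-1$.
   Context: Let $N=pq$ and $e=(p-1)(q-1)/2$. Let $x$ be the unique element of $\mathbb{Z}_N$ with $x\equiv g\pmod p$ and $x\equiv 1\pmod q$. The Whiteman generalized cyclotomic classes of order 2 are $D_i=\{g^{s}x^{i}\bmod N: s=0,1,\dots,e-1\}$ for $i=0,1$; they partition $\mathbb{Z}_N^{*}$. For a prime $r\in\{p,q\}$, let $D_0^{(r)}=\{g^{2t}\bmod r: 0\le t\le \frac{r-1}{2}-1\}$ and $D_1^{(r)}=\{g^{2t+1}\bmod r: 0\le t\le \frac{r-1}{2}-1\}$. For $j=0,1$ let $D_j^{(p)}q=\{yq\bmod N: y\in D_j^{(p)}\}$ and $D_j^{(q)}p=\{yp\bmod N: y\in D_j^{(q)}\}$. Define $C_0=\{0\}\cup D_0\cup D_0^{(p)}q\cup D_0^{(q)}p$ and $C_1=D_1\cup D_1^{(p)}q\cup D_1^{(q)}p$, so $\mathbb{Z}_N=C_0\cup C_1$ (disjoint). The sequence $s=\{s_i\}$ of period $N$ is defined by $s_i=0$ if $i\bmod N\in C_0$ and $s_i=1$ if $i\bmod N\in C_1$. For a binary sequence $s$ of period $N$, let $S(2)=\sum_{i=0}^{N-1}s_i2^{i}$;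 its 2-adic complexity is $\varphi_2(s)=\left\lfloor \log_2\!\left(\frac{2^{N}-1}{\gcd(2^{N}-1,S(2))}+1\right)\right\rfloor$. *)

theory Defs
  imports "HOL-Analysis.Analysis" "HOL-Number_Theory.Number_Theory"
begin

definition wh_e :: "nat \<Rightarrow> nat \<Rightarrow> nat" where
  "wh_e p q = (p - 1) * (q - 1) div 2"

definition wh_x :: "nat \<Rightarrow> nat \<Rightarrow> nat \<Rightarrow> nat" where
  "wh_x p q g = (THE x. x < p * q \<and> [x = g] (mod p) \<and> [x = 1] (mod q))"

definition wh_D :: "nat \<Rightarrow> nat \<Rightarrow> nat \<Rightarrow> nat \<Rightarrow> nat set" where
  "wh_D p q g i = {(g ^ s * wh_x p q g ^ i) mod (p * q) | s. s < wh_e p q}"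

definition cyc_D :: "nat \<Rightarrow> nat \<Rightarrow> nat \<Rightarrow> nat set" where
  "cyc_D r g j = {g ^ (2 * t + j) mod r | t. t < (r - 1) div 2}"

definition wh_C0 :: "nat \<Rightarrow> nat \<Rightarrow> nat \<Rightarrow> nat set" where
  "wh_C0 p q g = {0} \<union> wh_D p q g 0 \<union> {(y * q) mod (p * q) | y. y \<in> cyc_D p g 0}
      \<union> {(y * p) mod (p * q) | y. y \<in> cyc_D q g 0}"

definition wh_C1 :: "nat \<Rightarrow> nat \<Rightarrow> nat \<Rightarrow> nat set" where
  "wh_C1 p q g = wh_D p q g 1 \<union> {(y * q) mod (p * q) | y. y \<in> cyc_D p g 1}
      \<union> {(y * p) mod (p * q) | y. y \<in> cyc_D q g 1}"

definition wh_seq :: "nat \<Rightarrow> nat \<Rightarrow> nat \<Rightarrow> nat \<Rightarrow> nat" where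
  "wh_seq p q g i = (if i mod (p * q) \<in> wh_C1 p q g then 1 else 0)"

definition two_adic_complexity :: "(nat \<Rightarrow> nat) \<Rightarrow> nat \<Rightarrow> int" where
  "two_adic_complexity s N =
     (let S = (\<Sum>i<N. s i * 2 ^ i) in
      \<lfloor>log 2 (real ((2 ^ N - 1) div gcd (2 ^ N - 1) S) + 1)\<rfloor>)"

end

theory Submission
  imports Defs
begin

lemma small_cong_eq:
  fixes x y m :: int
  assumes "x \<in> {-1,0,1}" "y \<in> {-1,0,1}" "m > 2" "[x = y] (mod m)"
  shows "x = y"
proof (rule ccontr)
  assume ne: "x \<noteq> y"
  have "m dvd (x - y)" using assms(4) by (simp add: cong_iff_dvd_diff)
  hence "\<bar>m\<bar> \<le> \<bar>x - y\<bar>" using ne by (intro dvd_imp_le_int) auto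
  moreover have "\<bar>x - y\<bar> \<le> 2" using assms(1,2) by auto
  ultimately show False using assms(3) by simp
qed

lemma Legendre_range: "Legendre a m \<in> {-1,0,1}"
  by (simp add: Legendre_def)

lemma Legendre_cong:
  assumes "[a = b] (mod m)" shows "Legendre a m = Legendre b m"
proof -
  have 1: "[a = 0] (mod m) \<longleftrightarrow> [b = 0] (mod m)" using assms by (meson cong_sym cong_trans)
  have 2: "QuadRes m a \<longleftrightarrow> QuadRes m b" unfolding QuadRes_def using assms by (meson cong_sym cong_trans)
  show ?thesis unfolding Legendre_def using 1 2 by simp
qed

lemma Legendre_mod: "Legendre (a mod m) m = Legendre a m"
  by (rule Legendre_cong) (simp add: cong_def)

lemma Legendre_mult:
  assumes "prime p" "2 < p"
  shows "Legendre (a*b) (int p) = Legendre a (int p) * Legendre b (int p)"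
proof -
  have "[Legendre (a*b) p = (a*b)^((p-1) div 2)] (mod p)" by (rule euler_criterion[OF assms])
  also have "(a*b)^((p-1) div 2) = a^((p-1) div 2) * b^((p-1) div 2)" by (simp add: power_mult_distrib)
  also have "[a^((p-1) div 2) * b^((p-1) div 2) = Legendre a p * Legendre b p] (mod p)"
    using euler_criterion[OF assms, of a] euler_criterion[OF assms, of b] by (meson cong_mult cong_sym)
  finally have c: "[Legendre (a*b) p = Legendre a p * Legendre b p] (mod p)" .
  have "Legendre a p * Legendre b p \<in> {-1,0,1}" using Legendre_range[of a p] Legendre_range[of b p] by auto
  then show ?thesis using small_cong_eq[OF Legendre_range _ _ c] assms by simp
qed

lemma Legendre_one: "m > 1 \<Longrightarrow> Legendre 1 m = 1"
  unfolding Legendre_def QuadRes_def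
  by (auto simp: cong_0_iff intro: exI[of _ 1] zdvd_not_zless)

lemma Legendre_power:
  assumes "prime p" "2 < p"
  shows "Legendre (a^k) (int p) = Legendre a (int p) ^ k"
  by (induction k) (use assms Legendre_one[of "int p"] Legendre_mult[OF assms] in auto)

lemma Legendre_nonzero:
  assumes "prime p" "\<not> int p dvd a"
  shows "Legendre a (int p) \<in> {-1,1}"
  using assms by (auto simp: Legendre_def cong_0_iff)

lemma Legendre_sq:
  assumes "prime p" "\<not> int p dvd a"
  shows "Legendre a (int p) * Legendre a (int p) = 1"
  using Legendre_nonzero[OF assms] by auto

lemma Legendre_minus_one_1mod4:
  assumes "prime p" "[p = 1] (mod 4)"
  shows "Legendre (-1) (int p) = 1"
proof -
  have p2: "2 < p" using prime_ge_2_nat[OF assms(1)] assms(2) unfolding cong_def by presburger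
  have ev: "even ((p - 1) div 2)" using assms(2) by (auto simp: cong_def) presburger
  have "[Legendre (-1) p = (-1)^((p-1) div 2)] (mod p)" by (rule euler_criterion[OF assms(1) p2])
  hence "[Legendre (-1) p = 1] (mod p)" using ev by simp
  thus ?thesis using small_cong_eq[of "Legendre (-1) (int p)" 1 "int p"] Legendre_range p2 by simp
qed

lemma Legendre_minus_one_3mod4:
  assumes "prime p" "[p = 3] (mod 4)"
  shows "Legendre (-1) (int p) = -1"
proof -
  have p2: "2 < p" using prime_ge_2_nat[OF assms(1)] assms(2) unfolding cong_def by presburger
  have ev: "odd ((p - 1) div 2)" using assms(2) by (auto simp: cong_def) presburger
  have "[Legendre (-1) p = (-1)^((p-1) div 2)] (mod p)" by (rule euler_criterion[OF assms(1) p2])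
  hence "[Legendre (-1) p = -1] (mod p)" using ev by simp
  thus ?thesis using small_cong_eq[of "Legendre (-1) (int p)" "-1" "int p"] Legendre_range p2 by simp
qed

lemma primroot_nonres:
  assumes "prime P" "2 < P" "residue_primroot P g"
  shows "Legendre (int g) (int P) = -1"
proof -
  have cop: "coprime P g" and ordg: "ord P g = P - 1"
    using assms by (auto simp: residue_primroot_def totient_prime)
  have nd: "\<not> int P dvd int g"
  proof
    assume "int P dvd int g" hence "P dvd g" by simp
    hence "P dvd gcd P g" by simp
    with cop assms(2) show False by simp
  qed
  have eu: "[Legendre (int g) P = int g ^ ((P-1) div 2)] (mod P)" by (rule euler_criterion[OF assms(1,2)])
  show ?thesis
  proof (rule ccontr)
    assume "Legendre (int g) (int P) \<noteq> -1"
    hence "Legendre (int g) (int P) = 1" using Legendre_nonzero[OF assms(1) nd] by auto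
    hence "[int (g ^ ((P-1) div 2)) = int (Suc 0)] (mod int P)" using eu by (simp add: cong_sym)
    hence "[g ^ ((P-1) div 2) = Suc 0] (mod P)" unfolding cong_int_iff .
    hence "ord P g dvd (P-1) div 2" by (simp add: ord_divides')
    hence "P - 1 dvd (P - 1) div 2" using ordg by simp
    moreover have "0 < (P - 1) div 2" "(P-1) div 2 < P - 1" using assms(2) by auto
    ultimately show False by (simp add: nat_dvd_not_less)
  qed
qed

lemma Legendre_primroot_pow:
  assumes "prime P" "2 < P" "residue_primroot P g"
  shows "Legendre (int (g ^ k mod P)) (int P) = (-1) ^ k"
proof -
  have "Legendre (int (g ^ k mod P)) (int P) = Legendre (int g ^ k) (int P)"
    by (simp add: of_nat_mod Legendre_mod)
  also have "\<dots> = (-1)^k" using Legendre_power[OF assms(1,2)] primroot_nonres[OF assms] by simp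
  finally show ?thesis .
qed


lemma nat_cong_to_int: "[a = b] (mod m) \<Longrightarrow> [int a = int b] (mod int m)"
  by (simp add: cong_int_iff)

lemma pow_mod_exp:
  fixes x :: int
  assumes "[x ^ n = 1] (mod m)"
  shows "[x ^ k = x ^ (k mod n)] (mod m)"
proof -
  have "x ^ k = x ^ (n * (k div n) + k mod n)" by simp
  also have "\<dots> = (x ^ n) ^ (k div n) * x ^ (k mod n)" by (simp only: power_add power_mult)
  also have "[(x ^ n) ^ (k div n) * x ^ (k mod n) = 1 ^ (k div n) * x ^ (k mod n)] (mod m)"
    by (intro cong_mult cong_pow assms cong_refl)
  finally show ?thesis by simp
qed

lemma ord_prime_exp:
  fixes u r p k :: nat
  assumes "prime p" "[u ^ p = 1] (mod r)" "\<not> [u = 1] (mod r)" "\<not> p dvd k"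
  shows "\<not> [u ^ k = 1] (mod r)"
proof
  assume k: "[u^k = 1] (mod r)"
  have "ord r u dvd p" using assms(2) ord_divides'[of u p r] by simp
  hence "ord r u = 1 \<or> ord r u = p" using prime_nat_iff[THEN iffD1, OF assms(1)] by blast
  moreover have "ord r u \<noteq> 1" using assms(3) ord_eq_Suc_0_iff[of r u] by simp
  ultimately have "ord r u = p" by blast
  moreover have "ord r u dvd k" using k ord_divides'[of u k r] by simp
  ultimately show False using assms(4) by simp
qed

lemma geom_sum_cong:
  fixes v r p :: nat
  assumes "prime r" "[v ^ p = 1] (mod r)" "\<not> [v = 1] (mod r)" "p > 0"
  shows "[(\<Sum>a\<in>{1..<p}. int v ^ a) = -1] (mod int r)"
proof -
  have e: "int v ^ p - 1 = (int v - 1) * (\<Sum>a<p. int v ^ a)" by (rule power_diff_1_eq)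
  have "[int v ^ p = 1] (mod int r)" using nat_cong_to_int[OF assms(2)] by simp
  hence "int r dvd int v ^ p - 1" by (simp add: cong_iff_dvd_diff)
  hence d: "int r dvd (int v - 1) * (\<Sum>a<p. int v ^ a)" using e by simp
  have "\<not> int r dvd (int v - 1)"
  proof
    assume "int r dvd (int v - 1)"
    hence "[int v = int 1] (mod int r)" by (simp add: cong_iff_dvd_diff)
    hence "[v = 1] (mod r)" unfolding cong_int_iff .
    with assms(3) show False by simp
  qed
  moreover have "prime (int r)" using assms(1) by simp
  ultimately have "int r dvd (\<Sum>a<p. int v ^ a)" using d prime_dvd_multD by blast
  moreover have "(\<Sum>a<p. int v ^ a) = 1 + (\<Sum>a\<in>{1..<p}. int v ^ a)"
  proof -
    have "{..<p} = insert 0 {1..<p}" using \<open>p > 0\<close> by auto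
    thus ?thesis by simp
  qed
  ultimately have "int r dvd 1 + (\<Sum>a\<in>{1..<p}. int v ^ a)" by simp
  thus ?thesis unfolding cong_iff_dvd_diff by (simp add: algebra_simps)
qed

lemma mult_mod_bij:
  fixes a p :: nat
  assumes "prime p" "coprime a p"
  shows "bij_betw (\<lambda>t. a * t mod p) {1..<p} {1..<p}"
proof -
  have sub: "(\<lambda>t. a * t mod p) ` {1..<p} \<subseteq> {1..<p}"
  proof
    fix y assume "y \<in> (\<lambda>t. a * t mod p) ` {1..<p}"
    then obtain t where t: "t \<in> {1..<p}" "y = a * t mod p" by auto
    have "\<not> p dvd a"
    proof
      assume "p dvd a" hence "p dvd gcd a p" by simp
      with assms show False by (simp add: prime_nat_iff)
    qed
    moreover have "\<not> p dvd t" using t nat_dvd_not_less by auto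
    ultimately have "\<not> p dvd a * t" using assms(1) prime_dvd_multD by blast
    hence "y \<noteq> 0" using t by (simp add: dvd_eq_mod_eq_0)
    moreover have "y < p" using t assms(1) prime_gt_0_nat by simp
    ultimately show "y \<in> {1..<p}" by simp
  qed
  have inj: "inj_on (\<lambda>t. a * t mod p) {1..<p}"
  proof
    fix x y assume xy: "x \<in> {1..<p}" "y \<in> {1..<p}" "a * x mod p = a * y mod p"
    hence "[a * x = a * y] (mod p)" by (simp add: cong_def)
    hence "[x = y] (mod p)" using cong_mult_lcancel_nat assms(2) by blast
    thus "x = y" using xy by (simp add: cong_def)
  qed
  show ?thesis unfolding bij_betw_def using inj endo_inj_surj[OF _ sub inj] by simp
qed


lemma prime_coprime_less:
  fixes a p :: nat
  assumes "prime p" "0 < a" "a < p"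
  shows "coprime a p"
proof -
  have "\<not> p dvd a" using assms nat_dvd_not_less by auto
  thus ?thesis using prime_imp_coprime[OF assms(1)] coprime_commute by blast
qed

lemma sum_Legendre_zero:
  fixes p n :: nat
  assumes "prime p" "2 < p" "Legendre (int n) (int p) = -1"
  shows "(\<Sum>t\<in>{1..<p}. Legendre (int t) (int p)) = 0"
proof -
  have cop: "coprime n p"
  proof (rule ccontr)
    assume "\<not> coprime n p"
    hence "p dvd n" using prime_imp_coprime[OF assms(1), of n] coprime_commute by blast
    hence "Legendre (int n) (int p) = 0" by (simp add: Legendre_def cong_0_iff)
    with assms(3) show False by simp
  qed
  let ?L = "\<lambda>t. Legendre (int t) (int p)"
  have "(\<Sum>t\<in>{1..<p}. ?L t) = (\<Sum>t\<in>{1..<p}. ?L (n * t mod p))"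
    using sum.reindex_bij_betw[OF mult_mod_bij[OF assms(1) cop], of ?L] by simp
  also have "\<dots> = (\<Sum>t\<in>{1..<p}. ?L n * ?L t)"
    by (intro sum.cong refl) (simp add: of_nat_mod Legendre_mod Legendre_mult[OF assms(1,2)])
  also have "\<dots> = - (\<Sum>t\<in>{1..<p}. ?L t)" using assms(3) by (simp add: sum_negf)
  finally show ?thesis by simp
qed

lemma gauss_sq:
  fixes p r u n :: nat
  assumes "prime p" "2 < p" "prime r" "[u ^ p = 1] (mod r)" "\<not> [u = 1] (mod r)"
    "Legendre (int n) (int p) = -1"
  shows "[(\<Sum>a\<in>{1..<p}. Legendre (int a) (int p) * int u ^ a)^2 = Legendre (-1) (int p) * int p] (mod int r)"
proof -
  let ?L = "\<lambda>t. Legendre (int t) (int p)"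
  let ?U = "\<lambda>k. int u ^ k"
  let ?A = "{1..<p}"
  have up: "[int u ^ p = 1] (mod int r)" using nat_cong_to_int[OF assms(4)] by simp
  have Umod: "[?U k = ?U (k mod p)] (mod int r)" for k using pow_mod_exp[OF up] .
  have inner: "[(\<Sum>b\<in>?A. ?L b * ?U b) = ?L a * (\<Sum>t\<in>?A. ?L t * ?U (a*t))] (mod int r)"
    if a: "a \<in> ?A" for a
  proof -
    have cop: "coprime a p" using a assms(1) prime_coprime_less by simp
    have "(\<Sum>b\<in>?A. ?L b * ?U b) = (\<Sum>t\<in>?A. ?L (a*t mod p) * ?U (a*t mod p))"
      using sum.reindex_bij_betw[OF mult_mod_bij[OF assms(1) cop], of "\<lambda>b. ?L b * ?U b"] by simp
    also have "[\<dots> = (\<Sum>t\<in>?A. ?L a * (?L t * ?U (a*t)))] (mod int r)"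
    proof (rule cong_sum)
      fix t assume "t \<in> ?A"
      have e: "?L (a*t mod p) = ?L a * ?L t"
        by (simp add: of_nat_mod Legendre_mod Legendre_mult[OF assms(1,2)])
      have "[?U (a*t mod p) = ?U (a*t)] (mod int r)" using Umod[of "a*t"] by (simp add: cong_sym)
      hence "[?L a * ?L t * ?U (a*t mod p) = ?L a * ?L t * ?U (a*t)] (mod int r)"
        by (rule cong_mult[OF cong_refl])
      thus "[?L (a*t mod p) * ?U (a*t mod p) = ?L a * (?L t * ?U (a*t))] (mod int r)"
        by (simp add: e mult.assoc)
    qed
    also have "(\<Sum>t\<in>?A. ?L a * (?L t * ?U (a*t))) = ?L a * (\<Sum>t\<in>?A. ?L t * ?U (a*t))"
      by (simp add: sum_distrib_left)
    finally show ?thesis .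
  qed
  define G where "G = (\<Sum>a\<in>?A. ?L a * ?U a)"
  have "G^2 = (\<Sum>a\<in>?A. ?L a * ?U a * G)" by (simp add: G_def power2_eq_square sum_distrib_right)
  also have "[\<dots> = (\<Sum>a\<in>?A. ?L a * ?U a * (?L a * (\<Sum>t\<in>?A. ?L t * ?U (a*t))))] (mod int r)"
    by (rule cong_sum, rule cong_mult[OF cong_refl]) (use inner in \<open>simp add: G_def\<close>)
  also have "(\<Sum>a\<in>?A. ?L a * ?U a * (?L a * (\<Sum>t\<in>?A. ?L t * ?U (a*t)))) = (\<Sum>a\<in>?A. \<Sum>t\<in>?A. ?L t * ?U (a*(t+1)))"
  proof (rule sum.cong[OF refl])
    fix a assume a: "a \<in> ?A"
    have "\<not> int p dvd int a" using a by (auto dest: zdvd_imp_le)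
    hence sq: "?L a * ?L a = 1" using Legendre_sq[OF assms(1)] by blast
    have "?L a * ?U a * (?L a * (\<Sum>t\<in>?A. ?L t * ?U (a*t))) = (\<Sum>t\<in>?A. (?L a * ?L a) * (?L t * (?U a * ?U (a*t))))"
      by (simp add: sum_distrib_left ac_simps)
    also have "\<dots> = (\<Sum>t\<in>?A. ?L t * ?U (a*(t+1)))"
      by (simp add: sq power_add[symmetric] algebra_simps)
    finally show "?L a * ?U a * (?L a * (\<Sum>t\<in>?A. ?L t * ?U (a*t))) = (\<Sum>t\<in>?A. ?L t * ?U (a*(t+1)))" .
  qed
  also have "\<dots> = (\<Sum>t\<in>?A. ?L t * (\<Sum>a\<in>?A. ?U (a*(t+1))))"
    by (subst sum.swap) (simp add: sum_distrib_left)
  also have "[\<dots> = (\<Sum>t\<in>?A. ?L t * (if t = p - 1 then int p - 1 else -1))] (mod int r)"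
  proof (rule cong_sum, rule cong_mult[OF cong_refl])
    fix t assume t: "t \<in> ?A"
    show "[(\<Sum>a\<in>?A. ?U (a*(t+1))) = (if t = p - 1 then int p - 1 else -1)] (mod int r)"
    proof (cases "t = p - 1")
      case True
      hence tp: "t + 1 = p" using t by simp
      have "[(\<Sum>a\<in>?A. ?U (a*(t+1))) = (\<Sum>a\<in>?A. 1)] (mod int r)"
      proof (rule cong_sum)
        fix a assume "a \<in> ?A"
        have "?U (a*(t+1)) = ?U (p*a)" using tp by (simp add: mult.commute)
        also have "\<dots> = (int u ^ p) ^ a" by (rule power_mult)
        also have "[\<dots> = 1 ^ a] (mod int r)" by (rule cong_pow[OF up])
        finally show "[?U (a*(t+1)) = 1] (mod int r)" by simp
      qed
      thus ?thesis using True assms(2) by (simp add: of_nat_diff)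
    next
      case False
      hence k: "\<not> p dvd (t+1)" using t by (auto dest: dvd_imp_le)
      have v1: "[(u^(t+1)) ^ p = 1] (mod r)"
      proof -
        have "(u^(t+1)) ^ p = (u^p)^(t+1)" by (simp only: power_mult[symmetric] mult.commute)
        also have "[\<dots> = 1^(t+1)] (mod r)" by (rule cong_pow[OF assms(4)])
        finally show ?thesis by simp
      qed
      have v2: "\<not> [u^(t+1) = 1] (mod r)" by (rule ord_prime_exp[OF assms(1,4,5) k])
      have "[(\<Sum>a\<in>?A. int (u^(t+1)) ^ a) = -1] (mod int r)"
        by (rule geom_sum_cong[OF assms(3) v1 v2]) (use assms(2) in simp)
      moreover have "(\<Sum>a\<in>?A. int (u^(t+1)) ^ a) = (\<Sum>a\<in>?A. ?U (a*(t+1)))"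
        by (intro sum.cong refl) (metis mult.commute of_nat_power power_mult)
      ultimately show ?thesis using False by simp
    qed
  qed
  also have "(\<Sum>t\<in>?A. ?L t * (if t = p - 1 then int p - 1 else -1)) =
      (\<Sum>t\<in>?A. ?L t * int p * (if t = p - 1 then 1 else 0)) - (\<Sum>t\<in>?A. ?L t)"
    by (simp add: sum_subtractf[symmetric], intro sum.cong refl) (auto simp: algebra_simps)
  also have "(\<Sum>t\<in>?A. ?L t * int p * (if t = p - 1 then 1 else 0)) = ?L (p - 1) * int p"
  proof -
    have "(\<Sum>t\<in>?A. ?L t * int p * (if t = p - 1 then 1 else 0)) = (\<Sum>t\<in>?A. if p - 1 = t then ?L t * int p else 0)"
      by (intro sum.cong refl) auto
    also have "\<dots> = ?L (p - 1) * int p" using assms(2) by (subst sum.delta') auto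
    finally show ?thesis .
  qed
  also have "?L (p - 1) = Legendre (-1) (int p)"
  proof -
    have "[int (p - 1) = -1] (mod int p)" using assms(2) by (simp add: of_nat_diff cong_iff_dvd_diff)
    thus ?thesis by (rule Legendre_cong)
  qed
  finally show ?thesis using sum_Legendre_zero[OF assms(1,2,6)] by (simp add: G_def)
qed


lemma crt_sum:
  fixes P Q :: nat and f :: "nat \<Rightarrow> nat \<Rightarrow> 'a::comm_monoid_add"
  assumes "coprime P Q" "P > 0" "Q > 0"
  shows "(\<Sum>i<P*Q. f (i mod P) (i mod Q)) = (\<Sum>a<P. \<Sum>b<Q. f a b)"
proof -
  let ?h = "\<lambda>i. (i mod P, i mod Q)"
  have inj: "inj_on ?h {..<P*Q}"
  proof
    fix i j assume ij: "i \<in> {..<P*Q}" "j \<in> {..<P*Q}" "?h i = ?h j"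
    hence "[i = j] (mod P)" "[i = j] (mod Q)" by (auto simp: cong_def)
    hence "[i = j] (mod P*Q)" using coprime_cong_mult_nat assms(1) by blast
    thus "i = j" using ij cong_less_modulus_unique_nat by auto
  qed
  have sub: "?h ` {..<P*Q} \<subseteq> {..<P} \<times> {..<Q}" using assms by auto
  have "card (?h ` {..<P*Q}) = card ({..<P} \<times> {..<Q})"
    using card_image[OF inj] by (simp add: card_cartesian_product)
  hence "?h ` {..<P*Q} = {..<P} \<times> {..<Q}" using card_subset_eq[OF _ sub] by simp
  hence bij: "bij_betw ?h {..<P*Q} ({..<P} \<times> {..<Q})" using inj by (simp add: bij_betw_def)
  have "(\<Sum>i<P*Q. f (i mod P) (i mod Q)) = (\<Sum>i<P*Q. (\<lambda>(a,b). f a b) (?h i))" by simp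
  also have "\<dots> = (\<Sum>z\<in>{..<P} \<times> {..<Q}. (\<lambda>(a,b). f a b) z)" by (rule sum.reindex_bij_betw[OF bij])
  also have "\<dots> = (\<Sum>a<P. \<Sum>b<Q. f a b)" by (simp add: sum.cartesian_product)
  finally show ?thesis .
qed

lemma wh_x_props:
  assumes "prime p" "prime q" "p \<noteq> q"
  shows "wh_x p q g < p * q \<and> [wh_x p q g = g] (mod p) \<and> [wh_x p q g = 1] (mod q)"
proof -
  have cop: "coprime p q" using assms by (simp add: primes_coprime)
  have "\<exists>!x. x < p * q \<and> [x = g] (mod p) \<and> [x = 1] (mod q)"
    by (rule binary_chinese_remainder_unique_nat[OF cop]) (use assms prime_gt_0_nat in auto)
  thus ?thesis unfolding wh_x_def by (rule theI')
qed

lemma primroot_surj: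
  assumes "prime P" "residue_primroot P g" "\<not> P dvd y"
  shows "\<exists>k < P - 1. g ^ k mod P = y mod P"
proof -
  have P1: "1 < P" using assms(1) prime_gt_1_nat by simp
  have "y mod P \<in> totatives P"
  proof -
    have "y mod P \<noteq> 0" using assms(3) by (simp add: dvd_eq_mod_eq_0)
    moreover have "coprime (y mod P) P"
    proof -
      have "\<not> P dvd (y mod P)" using nat_dvd_not_less[of "y mod P" P] \<open>y mod P \<noteq> 0\<close> P1 by simp
      thus ?thesis using prime_imp_coprime[OF assms(1)] coprime_commute by blast
    qed
    ultimately show ?thesis using P1 by (auto simp: totatives_def)
  qed
  hence "y mod P \<in> (\<lambda>i. g ^ i mod P) ` {..<totient P}"
    using residue_primroot_is_generator[OF P1 assms(2)] by (simp add: bij_betw_def)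
  thus ?thesis using totient_prime[OF assms(1)] by force
qed

lemma cyc1_char:
  assumes "prime P" "2 < P" "residue_primroot P g"
  shows "cyc_D P g 1 = {y. 0 < y \<and> y < P \<and> Legendre (int y) (int P) = -1}"
proof (intro equalityI subsetI)
  fix y assume "y \<in> cyc_D P g 1"
  then obtain t where t: "y = g ^ (2*t+1) mod P" unfolding cyc_D_def by auto
  have L: "Legendre (int y) (int P) = -1" using Legendre_primroot_pow[OF assms, of "2*t+1"] t by simp
  have "y \<noteq> 0"
  proof
    assume "y = 0" hence "Legendre (int y) (int P) = 0" by (simp add: Legendre_def)
    with L show False by simp
  qed
  moreover have "y < P" using t assms(2) by simp
  ultimately show "y \<in> {y. 0 < y \<and> y < P \<and> Legendre (int y) (int P) = -1}" using L by simp
next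
  fix y assume y: "y \<in> {y. 0 < y \<and> y < P \<and> Legendre (int y) (int P) = -1}"
  hence "\<not> P dvd y" by (auto dest: dvd_imp_le)
  then obtain k where k: "k < P - 1" "g ^ k mod P = y mod P" using primroot_surj[OF assms(1,3)] by blast
  hence "g ^ k mod P = y" using y by simp
  hence "(-1::int) ^ k = -1" using Legendre_primroot_pow[OF assms, of k] y by simp
  hence "odd k" by (metis neg_one_even_power one_neq_neg_one)
  then obtain t where "k = 2*t+1" using oddE by blast
  moreover have "t < (P - 1) div 2" using k(1) \<open>k = 2*t+1\<close> by simp
  ultimately show "y \<in> cyc_D P g 1" unfolding cyc_D_def using \<open>g ^ k mod P = y\<close> by auto
qed


lemma Legendre_nat_cong:
  "[a = b] (mod P) \<Longrightarrow> Legendre (int a) (int P) = Legendre (int b) (int P)"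
  by (rule Legendre_cong) (simp add: cong_int_iff)

lemma Legendre_dvd_zero: "P dvd a \<Longrightarrow> Legendre (int a) (int P) = 0"
  by (simp add: Legendre_def cong_0_iff)

lemma Legendre_prime_other:
  assumes "prime P" "prime Q" "P \<noteq> Q"
  shows "Legendre (int Q) (int P) * Legendre (int Q) (int P) = 1"
proof (rule Legendre_sq[OF assms(1)])
  show "\<not> int P dvd int Q"
  proof
    assume "int P dvd int Q" hence "P dvd Q" by simp
    hence "P = Q" using assms(1,2) primes_dvd_imp_eq by blast
    with assms(3) show False by simp
  qed
qed

lemma cycpart_char:
  assumes "prime P" "prime Q" "P \<noteq> Q" "2 < P" "residue_primroot P g" "i < P * Q"
  shows "i \<in> {(y * Q) mod (P * Q) | y. y \<in> cyc_D P g 1} \<longleftrightarrow>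
    Q dvd i \<and> \<not> P dvd i \<and> Legendre (int i) (int P) * Legendre (int Q) (int P) = -1"
proof
  assume "i \<in> {(y * Q) mod (P * Q) | y. y \<in> cyc_D P g 1}"
  then obtain y where y: "y \<in> cyc_D P g 1" "i = (y * Q) mod (P * Q)" by auto
  have y2: "0 < y" "y < P" "Legendre (int y) (int P) = -1" using y(1) cyc1_char[OF assms(1,4,5)] by auto
  have "y * Q < P * Q" using y2(2) assms(2) prime_gt_0_nat by simp
  hence iy: "i = y * Q" using y(2) by simp
  have Li: "Legendre (int i) (int P) = - Legendre (int Q) (int P)"
    using iy Legendre_mult[OF assms(1,4), of "int y" "int Q"] y2(3) by simp
  have "\<not> P dvd i"
  proof
    assume "P dvd i"
    hence "Legendre (int i) (int P) = 0" by (rule Legendre_dvd_zero)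
    with Li Legendre_prime_other[OF assms(1-3)] show False by simp
  qed
  moreover have "Q dvd i" using iy by simp
  ultimately show "Q dvd i \<and> \<not> P dvd i \<and> Legendre (int i) (int P) * Legendre (int Q) (int P) = -1"
    using Li Legendre_prime_other[OF assms(1-3)] by simp
next
  assume h: "Q dvd i \<and> \<not> P dvd i \<and> Legendre (int i) (int P) * Legendre (int Q) (int P) = -1"
  hence "Q dvd i" by simp
  then obtain y where "i = Q * y" unfolding dvd_def by blast
  hence iy: "i = y * Q" by simp
  have "y < P" using iy assms(6) assms(2) prime_gt_0_nat by simp
  moreover have "y \<noteq> 0"
  proof
    assume "y = 0" with iy have "i = 0" by simp
    with h show False by simp
  qed
  moreover have "Legendre (int y) (int P) = -1"
  proof -
    have "Legendre (int i) (int P) = Legendre (int y) (int P) * Legendre (int Q) (int P)"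
      using iy Legendre_mult[OF assms(1,4), of "int y" "int Q"] by simp
    hence "-1 = Legendre (int y) (int P) * (Legendre (int Q) (int P) * Legendre (int Q) (int P))"
      using h by (simp add: mult.assoc)
    thus ?thesis using Legendre_prime_other[OF assms(1-3)] by simp
  qed
  ultimately have "y \<in> cyc_D P g 1" using cyc1_char[OF assms(1,4,5)] by simp
  moreover have "i = (y * Q) mod (P * Q)" using iy assms(6) by simp
  ultimately show "i \<in> {(y * Q) mod (P * Q) | y. y \<in> cyc_D P g 1}" by blast
qed

lemma cong_scale:
  fixes x y a c :: nat
  assumes "[x = y] (mod a)"
  shows "[c * x = c * y] (mod c * a)"
  using assms by (simp add: cong_def mod_mult_mult1)

lemma par_lemma: "odd (k1 + k2) \<Longrightarrow> odd (p::nat) \<Longrightarrow> 2 < p \<Longrightarrow> (k1 + (p - 2)) mod 2 = k2 mod 2"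
  by (auto elim!: oddE) presburger?

lemma D1_char:
  assumes p: "prime p" "2 < p" "odd p" and q: "prime q" "2 < q" "odd q" and pq: "p \<noteq> q"
    and gcd2: "gcd (p - 1) (q - 1) = 2"
    and gp: "residue_primroot p g" and gq: "residue_primroot q g" and i: "i < p * q"
  shows "i \<in> wh_D p q g 1 \<longleftrightarrow> \<not> p dvd i \<and> \<not> q dvd i \<and>
           Legendre (int i) (int p) * Legendre (int i) (int q) = -1"
proof -
  define x where "x = wh_x p q g"
  have x: "x < p * q" "[x = g] (mod p)" "[x = 1] (mod q)" using wh_x_props[OF p(1) q(1) pq] x_def by auto
  have copg: "coprime p g" "coprime q g" using gp gq by (auto simp: residue_primroot_def)
  have ordp: "ord p g = p - 1" using gp totient_prime[OF p(1)] by (simp add: residue_primroot_def)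
  have ordq: "ord q g = q - 1" using gq totient_prime[OF q(1)] by (simp add: residue_primroot_def)
  have modp: "[y mod (p*q) = y] (mod p)" for y by (simp add: cong_def mod_mod_cancel)
  have modq: "[y mod (p*q) = y] (mod q)" for y by (simp add: cong_def mod_mod_cancel)
  have xp: "[g ^ s * x = g ^ Suc s] (mod p)" for s
    using cong_mult[OF cong_refl[of "g ^ s"] x(2)] by (simp add: mult.commute)
  have xq: "[g ^ s * x = g ^ s] (mod q)" for s
    using cong_mult[OF cong_refl[of "g ^ s"] x(3)] by simp
  show ?thesis
  proof
    assume "i \<in> wh_D p q g 1"
    then obtain s where s: "s < wh_e p q" "i = (g ^ s * x) mod (p * q)" unfolding wh_D_def x_def by auto
    have "[i = g ^ Suc s] (mod p)" using cong_trans[OF modp xp] s(2) by simp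
    hence "[i = g ^ Suc s mod p] (mod p)" by (simp add: cong_def)
    hence "Legendre (int i) (int p) = Legendre (int (g ^ Suc s mod p)) (int p)" by (rule Legendre_nat_cong)
    hence Lp: "Legendre (int i) (int p) = (-1) ^ Suc s"
      using Legendre_primroot_pow[OF p(1,2) gp, of "Suc s"] by (rule trans)
    have "[i = g ^ s] (mod q)" using cong_trans[OF modq xq] s(2) by simp
    hence "[i = g ^ s mod q] (mod q)" by (simp add: cong_def)
    hence "Legendre (int i) (int q) = Legendre (int (g ^ s mod q)) (int q)" by (rule Legendre_nat_cong)
    hence Lq: "Legendre (int i) (int q) = (-1) ^ s"
      using Legendre_primroot_pow[OF q(1,2) gq, of s] by (rule trans)
    have "\<not> p dvd i" using Lp Legendre_dvd_zero[of p i] by auto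
    moreover have "\<not> q dvd i" using Lq Legendre_dvd_zero[of q i] by auto
    ultimately show "\<not> p dvd i \<and> \<not> q dvd i \<and> Legendre (int i) (int p) * Legendre (int i) (int q) = -1"
      using Lp Lq by simp
  next
    assume h: "\<not> p dvd i \<and> \<not> q dvd i \<and> Legendre (int i) (int p) * Legendre (int i) (int q) = -1"
    obtain k1 where k1: "k1 < p - 1" "g ^ k1 mod p = i mod p" using primroot_surj[OF p(1) gp] h by blast
    obtain k2 where k2: "k2 < q - 1" "g ^ k2 mod q = i mod q" using primroot_surj[OF q(1) gq] h by blast
    have "Legendre (int i) (int p) = Legendre (int (g ^ k1 mod p)) (int p)"
      using Legendre_nat_cong[of i "g ^ k1 mod p" p] k1(2) by (simp add: cong_def)
    hence L1: "Legendre (int i) (int p) = (-1)^k1" using Legendre_primroot_pow[OF p(1,2) gp] by simp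
    have "Legendre (int i) (int q) = Legendre (int (g ^ k2 mod q)) (int q)"
      using Legendre_nat_cong[of i "g ^ k2 mod q" q] k2(2) by (simp add: cong_def)
    hence L2: "Legendre (int i) (int q) = (-1)^k2" using Legendre_primroot_pow[OF q(1,2) gq] by simp
    have "(-1::int)^(k1+k2) = -1" using h L1 L2 by (simp add: power_add)
    hence odd12: "odd (k1 + k2)" by (metis neg_one_even_power one_neq_neg_one)
    define a where "a = (p - 1) div 2"
    define b where "b = (q - 1) div 2"
    have pa: "p - 1 = 2 * a" using p(3) unfolding a_def by presburger
    have qb: "q - 1 = 2 * b" using q(3) unfolding b_def by presburger
    have g1: "gcd (2*a) (2*b) = 2 * gcd a b" by (rule gcd_mult_distrib_nat[symmetric])
    have g2: "gcd (2*a) (2*b) = 2" using gcd2 unfolding pa qb .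
    have "gcd a b = 1" using g1 g2 by linarith
    hence cab: "coprime a b" by (simp only: coprime_iff_gcd_eq_1)
    define m where "m = k1 + (p - 2)"
    have par: "m mod 2 = k2 mod 2" unfolding m_def by (rule par_lemma[OF odd12 p(3) p(2)])
    obtain t where t: "[t = m div 2] (mod a)" "[t = k2 div 2] (mod b)"
      using binary_chinese_remainder_nat[OF cab] by blast
    define s0 where "s0 = 2 * t + m mod 2"
    have s0p: "[s0 = m] (mod p - 1)"
    proof -
      have "[2 * t = 2 * (m div 2)] (mod 2 * a)" by (rule cong_scale[OF t(1)])
      hence "[2 * t + m mod 2 = 2 * (m div 2) + m mod 2] (mod 2 * a)" by (rule cong_add[OF _ cong_refl])
      thus ?thesis using pa by (simp add: s0_def)
    qed
    have s0q: "[s0 = k2] (mod q - 1)"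
    proof -
      have "[2 * t = 2 * (k2 div 2)] (mod 2 * b)" by (rule cong_scale[OF t(2)])
      hence "[2 * t + k2 mod 2 = 2 * (k2 div 2) + k2 mod 2] (mod 2 * b)" by (rule cong_add[OF _ cong_refl])
      thus ?thesis using qb par by (simp add: s0_def)
    qed
    define e where "e = wh_e p q"
    have "(p - 1) * (q - 1) = 2 * (2 * a * b)" using pa qb by simp
    hence e: "e = (p - 1) * b" "e = (q - 1) * a" unfolding e_def wh_e_def using pa qb by simp_all
    have "a > 0" "b > 0" using pa qb p(2) q(2) by auto
    hence epos: "e > 0" using e pa by simp
    define s where "s = s0 mod e"
    have slt: "s < e" using epos by (simp add: s_def)
    have sp: "[s = s0] (mod p - 1)" unfolding s_def cong_def using e(1) by (simp add: mod_mod_cancel)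
    have sq: "[s = s0] (mod q - 1)" unfolding s_def cong_def using e(2) by (simp add: mod_mod_cancel)
    have "[s + 1 = m + 1] (mod p - 1)" by (rule cong_add[OF cong_trans[OF sp s0p] cong_refl])
    hence "[Suc s = Suc m] (mod p - 1)" by simp
    moreover have "Suc m = k1 + (p - 1)" unfolding m_def using p(2) by simp
    ultimately have "[Suc s = k1] (mod p - 1)" by (simp add: cong_def)
    hence e1: "[g ^ Suc s = g ^ k1] (mod p)" using order_divides_expdiff[OF copg(1), of "Suc s" k1] ordp by simp
    have "[s = k2] (mod q - 1)" using cong_trans[OF sq s0q] .
    hence e2: "[g ^ s = g ^ k2] (mod q)" using order_divides_expdiff[OF copg(2)] ordq by simp
    define y where "y = (g ^ s * x) mod (p * q)"
    have "[y = i] (mod p)"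
    proof -
      have "[y = g ^ s * x] (mod p)" unfolding y_def by (rule modp)
      also have "[g ^ s * x = g ^ Suc s] (mod p)" by (rule xp)
      also have "[g ^ Suc s = g ^ k1] (mod p)" by (rule e1)
      also have "[g ^ k1 = i] (mod p)" using k1(2) by (simp add: cong_def)
      finally show ?thesis .
    qed
    moreover have "[y = i] (mod q)"
    proof -
      have "[y = g ^ s * x] (mod q)" unfolding y_def by (rule modq)
      also have "[g ^ s * x = g ^ s] (mod q)" by (rule xq)
      also have "[g ^ s = g ^ k2] (mod q)" by (rule e2)
      also have "[g ^ k2 = i] (mod q)" using k2(2) by (simp add: cong_def)
      finally show ?thesis .
    qed
    ultimately have "[y = i] (mod p * q)"
      using coprime_cong_mult_nat primes_coprime[OF p(1) q(1) pq] by blast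
    moreover have "y < p * q" unfolding y_def using p(1) q(1) prime_gt_0_nat by simp
    ultimately have "y = i" using i cong_less_modulus_unique_nat by blast
    thus "i \<in> wh_D p q g 1" unfolding wh_D_def x_def[symmetric] y_def using slt e_def by auto
  qed
qed


definition Xf :: "nat \<Rightarrow> int \<Rightarrow> nat \<Rightarrow> int" where
  "Xf P e a = Legendre (int a) (int P) + (if a = 0 then e else 0)"

lemma Xf_mod:
  assumes "prime P"
  shows "Xf P e (i mod P) = (if P dvd i then e else Legendre (int i) (int P))"
proof -
  have "Legendre (int (i mod P)) (int P) = Legendre (int i) (int P)"
    by (simp add: of_nat_mod Legendre_mod)
  moreover have "P dvd i \<Longrightarrow> Legendre (int i) (int P) = 0" by (rule Legendre_dvd_zero)
  ultimately show ?thesis unfolding Xf_def by (auto simp: dvd_eq_mod_eq_0)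
qed

lemma seq_char:
  assumes p: "prime p" "2 < p" "odd p" and q: "prime q" "2 < q" "odd q" and pq: "p \<noteq> q"
    and gcd2: "gcd (p - 1) (q - 1) = 2"
    and gp: "residue_primroot p g" and gq: "residue_primroot q g"
    and eps: "Legendre (int p) (int q) = Legendre (int q) (int p)"
    and i: "i < p * q"
  shows "2 * int (wh_seq p q g i) =
    1 - Xf p (Legendre (int q) (int p)) (i mod p) * Xf q (Legendre (int q) (int p)) (i mod q)"
proof -
  define \<epsilon> where "\<epsilon> = Legendre (int q) (int p)"
  define Lp where "Lp = Legendre (int i) (int p)"
  define Lq where "Lq = Legendre (int i) (int q)"
  have ee: "\<epsilon> * \<epsilon> = 1" unfolding \<epsilon>_def by (rule Legendre_prime_other[OF p(1) q(1) pq])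
  have i': "i < q * p" using i by (simp add: mult.commute)
  have c1: "i \<in> wh_D p q g 1 \<longleftrightarrow> \<not> p dvd i \<and> \<not> q dvd i \<and> Lp * Lq = -1"
    unfolding Lp_def Lq_def by (rule D1_char[OF p q pq gcd2 gp gq i])
  have c2: "i \<in> {(y * q) mod (p * q) | y. y \<in> cyc_D p g 1} \<longleftrightarrow> q dvd i \<and> \<not> p dvd i \<and> Lp * \<epsilon> = -1"
    unfolding Lp_def \<epsilon>_def by (rule cycpart_char[OF p(1) q(1) pq p(2) gp i])
  have c3': "i \<in> {(y * p) mod (q * p) | y. y \<in> cyc_D q g 1} \<longleftrightarrow> p dvd i \<and> \<not> q dvd i \<and> Lq * \<epsilon> = -1"
    unfolding Lq_def \<epsilon>_def eps[symmetric] by (rule cycpart_char[OF q(1) p(1) pq[symmetric] q(2) gq i'])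
  have qp: "q * p = p * q" by (rule mult.commute)
  have c3: "i \<in> {(y * p) mod (p * q) | y. y \<in> cyc_D q g 1} \<longleftrightarrow> p dvd i \<and> \<not> q dvd i \<and> Lq * \<epsilon> = -1"
    using c3' unfolding qp .
  have mem: "wh_seq p q g i = (if (\<not> p dvd i \<and> \<not> q dvd i \<and> Lp * Lq = -1) \<or>
      (q dvd i \<and> \<not> p dvd i \<and> Lp * \<epsilon> = -1) \<or> (p dvd i \<and> \<not> q dvd i \<and> Lq * \<epsilon> = -1) then 1 else 0)"
    unfolding wh_seq_def wh_C1_def using i c1 c2 c3 by simp
  have Xp: "Xf p \<epsilon> (i mod p) = (if p dvd i then \<epsilon> else Lp)" unfolding Lp_def by (rule Xf_mod[OF p(1)])
  have Xq: "Xf q \<epsilon> (i mod q) = (if q dvd i then \<epsilon> else Lq)" unfolding Lq_def by (rule Xf_mod[OF q(1)])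
  have Lp1: "\<not> p dvd i \<Longrightarrow> Lp \<in> {-1, 1}" unfolding Lp_def by (rule Legendre_nonzero[OF p(1)]) simp
  have Lq1: "\<not> q dvd i \<Longrightarrow> Lq \<in> {-1, 1}" unfolding Lq_def by (rule Legendre_nonzero[OF q(1)]) simp
  have e1: "\<epsilon> \<in> {-1, 1}" using ee by (auto simp: zmult_eq_1_iff)
  show ?thesis
  proof (cases "p dvd i")
    case pd: True
    show ?thesis
    proof (cases "q dvd i")
      case True
      have "p * q dvd i" using pd True primes_coprime[OF p(1) q(1) pq] by (simp add: divides_mult)
      hence "i = 0" using i by (auto dest: dvd_imp_le)
      thus ?thesis using mem Xp Xq ee pd True \<epsilon>_def by simp
    next
      case False
      thus ?thesis using mem Xp Xq pd Lq1 e1 \<epsilon>_def by auto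
    qed
  next
    case pn: False
    show ?thesis
    proof (cases "q dvd i")
      case True
      thus ?thesis using mem Xp Xq pn Lp1 e1 \<epsilon>_def by auto
    next
      case False
      thus ?thesis using mem Xp Xq pn Lp1 Lq1 \<epsilon>_def by auto
    qed
  qed
qed


lemma part_nontriv:
  fixes P r u :: nat
  assumes "prime P" "prime r" "[u ^ P = 1] (mod r)" "\<not> [u = 1] (mod r)"
  shows "[(\<Sum>a<P. int u ^ a) = 0] (mod int r)"
proof -
  have P0: "P > 0" using assms(1) prime_gt_0_nat by simp
  have "{..<P} = insert 0 {1..<P}" using P0 by auto
  hence "(\<Sum>a<P. int u ^ a) = 1 + (\<Sum>a\<in>{1..<P}. int u ^ a)" by simp
  moreover have "[1 + (\<Sum>a\<in>{1..<P}. int u ^ a) = 1 + -1] (mod int r)"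
    by (rule cong_add[OF cong_refl geom_sum_cong[OF assms(2,3,4) P0]])
  ultimately show ?thesis by simp
qed

lemma part_triv:
  fixes P r u n :: nat
  assumes "prime P" "2 < P" "[u = 1] (mod r)" "Legendre (int n) (int P) = -1"
  shows "[(\<Sum>a<P. int u ^ a) = int P] (mod int r)"
    and "[(\<Sum>a\<in>{1..<P}. Legendre (int a) (int P) * int u ^ a) = 0] (mod int r)"
proof -
  have u1: "[int u = 1] (mod int r)" using nat_cong_to_int[OF assms(3)] by simp
  have "[(\<Sum>a<P. int u ^ a) = (\<Sum>a<P. 1)] (mod int r)"
    by (rule cong_sum) (use cong_pow[OF u1] in simp)
  thus "[(\<Sum>a<P. int u ^ a) = int P] (mod int r)" by simp
  have "[(\<Sum>a\<in>{1..<P}. Legendre (int a) (int P) * int u ^ a) = (\<Sum>a\<in>{1..<P}. Legendre (int a) (int P) * 1)] (mod int r)"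
    by (rule cong_sum, rule cong_mult[OF cong_refl]) (use cong_pow[OF u1] in simp)
  thus "[(\<Sum>a\<in>{1..<P}. Legendre (int a) (int P) * int u ^ a) = 0] (mod int r)"
    using sum_Legendre_zero[OF assms(1,2,4)] by simp
qed

lemma X_sum:
  fixes U :: int
  assumes "P > 0"
  shows "(\<Sum>a<P. Xf P e a * U ^ a) = e + (\<Sum>a\<in>{1..<P}. Legendre (int a) (int P) * U ^ a)"
proof -
  have "{..<P} = insert 0 {1..<P}" using assms by auto
  hence "(\<Sum>a<P. Xf P e a * U ^ a) = Xf P e 0 + (\<Sum>a\<in>{1..<P}. Xf P e a * U ^ a)" by simp
  moreover have "Xf P e 0 = e" by (simp add: Xf_def Legendre_def)
  moreover have "(\<Sum>a\<in>{1..<P}. Xf P e a * U ^ a) = (\<Sum>a\<in>{1..<P}. Legendre (int a) (int P) * U ^ a)"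
    by (intro sum.cong refl) (auto simp: Xf_def)
  ultimately show ?thesis by simp
qed


lemma expo_split:
  fixes p q r q' p' i :: nat
  assumes p: "prime p" and q: "prime q" and pq: "p \<noteq> q"
    and two: "[(2::int) ^ (p * q) = 1] (mod int r)"
    and qq: "[q * q' = 1] (mod p)" and pp: "[p * p' = 1] (mod q)"
  shows "[(2::int) ^ i = (2 ^ (q * q')) ^ (i mod p) * (2 ^ (p * p')) ^ (i mod q)] (mod int r)"
proof -
  define E where "E = q * q' * (i mod p) + p * p' * (i mod q)"
  have "((2::int) ^ (q * q')) ^ (i mod p) * (2 ^ (p * p')) ^ (i mod q) = 2 ^ E"
    unfolding E_def by (simp add: power_add power_mult)
  moreover have "[E = i] (mod p)"
  proof -
    have "[q * q' * (i mod p) = 1 * (i mod p)] (mod p)" by (rule cong_mult[OF qq cong_refl])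
    moreover have "[p * p' * (i mod q) = 0] (mod p)" by (simp add: cong_0_iff)
    ultimately have "[E = 1 * (i mod p) + 0] (mod p)" unfolding E_def by (rule cong_add)
    thus ?thesis by (simp add: cong_def)
  qed
  moreover have "[E = i] (mod q)"
  proof -
    have "[q * q' * (i mod p) = 0] (mod q)" by (simp add: cong_0_iff)
    moreover have "[p * p' * (i mod q) = 1 * (i mod q)] (mod q)" by (rule cong_mult[OF pp cong_refl])
    ultimately have "[E = 0 + 1 * (i mod q)] (mod q)" unfolding E_def by (rule cong_add)
    thus ?thesis by (simp add: cong_def)
  qed
  ultimately have Ei: "E mod (p * q) = i mod (p * q)"
    using coprime_cong_mult_nat[of E i p q] primes_coprime[OF p q pq] by (simp add: cong_def)
  have "[(2::int) ^ E = 2 ^ (E mod (p * q))] (mod int r)" by (rule pow_mod_exp[OF two])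
  also have "2 ^ (E mod (p * q)) = (2::int) ^ (i mod (p * q))" using Ei by simp
  also have "[(2::int) ^ (i mod (p * q)) = 2 ^ i] (mod int r)" using pow_mod_exp[OF two, of i] by (simp add: cong_sym)
  finally show ?thesis using \<open>((2::int) ^ (q * q')) ^ (i mod p) * (2 ^ (p * p')) ^ (i mod q) = 2 ^ E\<close>
    by (simp add: cong_sym)
qed

lemma sum_identity:
  assumes p: "prime p" "2 < p" "odd p" and q: "prime q" "2 < q" "odd q" and pq: "p \<noteq> q"
    and gcd2: "gcd (p - 1) (q - 1) = 2"
    and gp: "residue_primroot p g" and gq: "residue_primroot q g"
    and eps: "Legendre (int p) (int q) = Legendre (int q) (int p)"
    and two: "[(2::int) ^ (p * q) = 1] (mod int r)"
    and qq: "[q * q' = 1] (mod p)" and pp: "[p * p' = 1] (mod q)"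
  shows "[2 * int (\<Sum>i<p*q. wh_seq p q g i * 2 ^ i) =
     (\<Sum>a<p. (2 ^ (q * q')) ^ a) * (\<Sum>b<q. (2 ^ (p * p')) ^ b) -
     (\<Sum>a<p. Xf p (Legendre (int q) (int p)) a * (2 ^ (q * q')) ^ a) *
     (\<Sum>b<q. Xf q (Legendre (int q) (int p)) b * (2 ^ (p * p')) ^ b)] (mod int r)"
proof -
  define e where "e = Legendre (int q) (int p)"
  define U :: int where "U = 2 ^ (q * q')"
  define W :: int where "W = 2 ^ (p * p')"
  define F where "F = (\<lambda>a b. (1 - Xf p e a * Xf q e b) * U ^ a * W ^ b)"
  have "2 * int (\<Sum>i<p*q. wh_seq p q g i * 2 ^ i) = (\<Sum>i<p*q. (2 * int (wh_seq p q g i)) * 2 ^ i)"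
    by (simp add: sum_distrib_left mult.assoc)
  also have "\<dots> = (\<Sum>i<p*q. (1 - Xf p e (i mod p) * Xf q e (i mod q)) * 2 ^ i)"
    by (intro sum.cong refl) (use seq_char[OF p q pq gcd2 gp gq eps] in \<open>simp add: e_def\<close>)
  also have "[(\<Sum>i<p*q. (1 - Xf p e (i mod p) * Xf q e (i mod q)) * 2 ^ i) = (\<Sum>i<p*q. F (i mod p) (i mod q))] (mod int r)"
  proof (rule cong_sum)
    fix i assume "i \<in> {..<p*q}"
    show "[(1 - Xf p e (i mod p) * Xf q e (i mod q)) * 2 ^ i = F (i mod p) (i mod q)] (mod int r)"
      unfolding F_def U_def W_def mult.assoc
      by (rule cong_mult[OF cong_refl expo_split[OF p(1) q(1) pq two qq pp]])
  qed
  also have "(\<Sum>i<p*q. F (i mod p) (i mod q)) = (\<Sum>a<p. \<Sum>b<q. F a b)"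
    by (rule crt_sum) (use primes_coprime[OF p(1) q(1) pq] p(1) q(1) prime_gt_0_nat in auto)
  also have "\<dots> = (\<Sum>a<p. U ^ a) * (\<Sum>b<q. W ^ b) - (\<Sum>a<p. Xf p e a * U ^ a) * (\<Sum>b<q. Xf q e b * W ^ b)"
    unfolding F_def sum_product
    by (simp add: sum_subtractf[symmetric] algebra_simps)
  finally show ?thesis unfolding e_def U_def W_def .
qed


lemma ord_case_A:
  fixes p q d q' p' :: nat
  assumes p: "prime p" and q: "prime q" and pq: "p \<noteq> q" and d: "d dvd p * q"
    and nu: "\<not> d dvd q * q'" and nw: "\<not> d dvd p * p'"
  shows "p * q dvd d"
proof -
  have "p dvd d"
  proof (rule ccontr)
    assume "\<not> p dvd d"
    hence "coprime d p" using prime_imp_coprime[OF p] coprime_commute by blast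
    hence "d dvd q" using d coprime_dvd_mult_right_iff by blast
    hence "d dvd q * q'" by simp
    with nu show False by simp
  qed
  moreover have "q dvd d"
  proof (rule ccontr)
    assume "\<not> q dvd d"
    hence "coprime d q" using prime_imp_coprime[OF q] coprime_commute by blast
    hence "d dvd p" using d coprime_dvd_mult_left_iff by blast
    hence "d dvd p * p'" by simp
    with nw show False by simp
  qed
  ultimately show ?thesis using divides_mult primes_coprime[OF p q pq] by blast
qed

lemma ord_case_B:
  fixes p q d q' :: nat
  assumes p: "prime p" and q: "prime q" and pq: "p \<noteq> q" and d: "d dvd p * q"
    and du: "d dvd q * q'" and d1: "d \<noteq> 1" and nq': "\<not> p dvd q'"
  shows "q dvd d"
proof (rule ccontr)
  assume "\<not> q dvd d"
  hence "coprime d q" using prime_imp_coprime[OF q] coprime_commute by blast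
  hence "d dvd p" using d coprime_dvd_mult_left_iff by blast
  hence "d = p" using d1 prime_nat_iff[THEN iffD1, OF p] by auto
  hence "p dvd q * q'" using du by simp
  hence "p dvd q \<or> p dvd q'" using p prime_dvd_mult_iff by blast
  thus False using nq' pq p q primes_dvd_imp_eq by blast
qed

lemma root_case:
  fixes e G c :: int and r :: nat
  assumes "int r dvd e + G" "e * e = 1" "[G ^ 2 = c] (mod int r)"
  shows "[c = 1] (mod int r)"
proof -
  have "[G = - e] (mod int r)" using assms(1) by (simp add: cong_iff_dvd_diff add.commute)
  hence "[G ^ 2 = (- e) ^ 2] (mod int r)" by (rule cong_pow)
  hence "[G ^ 2 = 1] (mod int r)" using assms(2) by (simp add: power2_eq_square)
  thus ?thesis using assms(3) by (meson cong_sym cong_trans)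
qed

lemma p4_even: "[p = 1] (mod 4) \<Longrightarrow> even ((p - 1) div 2)" for p :: nat
  by (auto simp: cong_def) presburger


lemma key:
  assumes p: "prime p" "2 < p" "odd p" and q: "prime q" "2 < q" "odd q" and pq: "p \<noteq> q"
    and p4: "[p = 1] (mod 4)" and q4: "[q = 3] (mod 4)"
    and gcd2: "gcd (p - 1) (q - 1) = 2"
    and gp: "residue_primroot p g" and gq: "residue_primroot q g"
    and r: "prime r" and rd: "r dvd 2 ^ (p * q) - 1"
  shows "\<not> r dvd (\<Sum>i<p*q. wh_seq p q g i * 2 ^ i)"
proof
  assume rS: "r dvd (\<Sum>i<p*q. wh_seq p q g i * 2 ^ i)"
  define N where "N = p * q"
  define e where "e = Legendre (int q) (int p)"
  have ee: "e * e = 1" unfolding e_def by (rule Legendre_prime_other[OF p(1) q(1) pq])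
  have eps: "Legendre (int p) (int q) = Legendre (int q) (int p)"
  proof -
    have "Legendre (int p) (int q) * Legendre (int q) (int p) = (-1) ^ ((p - 1) div 2 * ((q - 1) div 2))"
      by (rule Quadratic_Reciprocity[OF p(1,2) q(1,2) pq])
    moreover have "even ((p - 1) div 2 * ((q - 1) div 2))" using p4_even[OF p4] by simp
    ultimately have h: "Legendre (int p) (int q) * e = 1" by (simp add: e_def)
    have "Legendre (int p) (int q) = Legendre (int p) (int q) * (e * e)" using ee by simp
    also have "\<dots> = (Legendre (int p) (int q) * e) * e" by (simp only: mult.assoc)
    also have "\<dots> = e" using h by simp
    finally show ?thesis unfolding e_def .
  qed
  have N1: "1 \<le> (2::nat) ^ N" by simp
  have r1: "r > 1" using r prime_gt_1_nat by simp
  have r2: "r \<noteq> 2"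
  proof
    assume "r = 2"
    hence a1: "2 dvd (2::nat) ^ N - 1" using rd N_def by simp
    have a2: "2 dvd (2::nat) ^ N" using p(1) q(1) prime_gt_0_nat N_def by simp
    have "2 dvd (2::nat) ^ N - (2 ^ N - 1)" by (rule dvd_diff_nat[OF a2 a1])
    moreover have "(2::nat) ^ N - (2 ^ N - 1) = 1" using N1 by simp
    ultimately have "2 dvd (1::nat)" by simp
    thus False by simp
  qed
  have r3: "r > 2" using prime_ge_2_nat[OF r] r2 by simp
  hence rodd: "odd r" by (rule prime_odd_nat[OF r])
  have two_int: "[(2::int) ^ N = 1] (mod int r)"
  proof -
    have "int r dvd int (2 ^ N - 1)" using rd unfolding N_def int_dvd_int_iff .
    moreover have "int (2 ^ N - 1) = (2::int) ^ N - 1" using N1 by (simp add: of_nat_diff)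
    ultimately have "int r dvd (2::int) ^ N - 1" by simp
    thus ?thesis by (simp add: cong_iff_dvd_diff)
  qed
  have two_nat: "[(2::nat) ^ N = 1] (mod r)"
  proof -
    have "[int (2 ^ N) = int 1] (mod int r)" using two_int by simp
    thus ?thesis unfolding cong_int_iff .
  qed
  obtain q' where qq: "[q * q' = 1] (mod p)"
    using cong_solve_coprime_nat[of q p] primes_coprime[OF q(1) p(1) pq[symmetric]] by auto
  obtain p' where pp: "[p * p' = 1] (mod q)"
    using cong_solve_coprime_nat[of p q] primes_coprime[OF p(1) q(1) pq] by auto
  have nq': "\<not> p dvd q'"
  proof
    assume "p dvd q'" hence "[q * q' = 0] (mod p)" by (simp add: cong_0_iff)
    hence "[1 = 0] (mod p)" using qq by (meson cong_sym cong_trans)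
    thus False using p(2) by (simp add: cong_def)
  qed
  have np': "\<not> q dvd p'"
  proof
    assume "q dvd p'" hence "[p * p' = 0] (mod q)" by (simp add: cong_0_iff)
    hence "[1 = 0] (mod q)" using pp by (meson cong_sym cong_trans)
    thus False using q(2) by (simp add: cong_def)
  qed
  define u :: nat where "u = 2 ^ (q * q')"
  define w :: nat where "w = 2 ^ (p * p')"
  have up: "[u ^ p = 1] (mod r)"
  proof -
    have "u ^ p = (2 ^ N) ^ q'" unfolding u_def N_def by (simp add: power_mult[symmetric] ac_simps)
    also have "[\<dots> = 1 ^ q'] (mod r)" by (rule cong_pow[OF two_nat])
    finally show ?thesis by simp
  qed
  have wq: "[w ^ q = 1] (mod r)"
  proof -
    have "w ^ q = (2 ^ N) ^ p'" unfolding w_def N_def by (simp add: power_mult[symmetric] ac_simps)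
    also have "[\<dots> = 1 ^ p'] (mod r)" by (rule cong_pow[OF two_nat])
    finally show ?thesis by simp
  qed
  define PU where "PU = (\<Sum>a<p. int u ^ a)"
  define PW where "PW = (\<Sum>b<q. int w ^ b)"
  define GU where "GU = (\<Sum>a\<in>{1..<p}. Legendre (int a) (int p) * int u ^ a)"
  define GW where "GW = (\<Sum>b\<in>{1..<q}. Legendre (int b) (int q) * int w ^ b)"
  have ident: "[2 * int (\<Sum>i<p*q. wh_seq p q g i * 2 ^ i) = PU * PW - (e + GU) * (e + GW)] (mod int r)"
  proof -
    have "[2 * int (\<Sum>i<p*q. wh_seq p q g i * 2 ^ i) =
     (\<Sum>a<p. (2 ^ (q * q')) ^ a) * (\<Sum>b<q. (2 ^ (p * p')) ^ b) -
     (\<Sum>a<p. Xf p e a * (2 ^ (q * q')) ^ a) *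
     (\<Sum>b<q. Xf q e b * (2 ^ (p * p')) ^ b)] (mod int r)"
      unfolding e_def by (rule sum_identity[OF p q pq gcd2 gp gq eps two_int[unfolded N_def] qq pp])
    moreover have "(\<Sum>a<p. Xf p e a * (2 ^ (q * q')) ^ a) = e + GU"
      unfolding GU_def u_def using X_sum[of p e] p(1) prime_gt_0_nat by simp
    moreover have "(\<Sum>b<q. Xf q e b * (2 ^ (p * p')) ^ b) = e + GW"
      unfolding GW_def w_def using X_sum[of q e] q(1) prime_gt_0_nat by simp
    ultimately show ?thesis unfolding PU_def PW_def u_def w_def by simp
  qed
  have "int r dvd int (\<Sum>i<p*q. wh_seq p q g i * 2 ^ i)" using rS by (simp only: int_dvd_int_iff)
  hence "[2 * int (\<Sum>i<p*q. wh_seq p q g i * 2 ^ i) = 0] (mod int r)" by (simp add: cong_0_iff)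
  hence main: "[PU * PW - (e + GU) * (e + GW) = 0] (mod int r)" using ident by (meson cong_sym cong_trans)
  have gnp: "Legendre (int g) (int p) = -1" by (rule primroot_nonres[OF p(1,2) gp])
  have gnq: "Legendre (int g) (int q) = -1" by (rule primroot_nonres[OF q(1,2) gq])
  have Lm1p: "Legendre (-1) (int p) = 1" by (rule Legendre_minus_one_1mod4[OF p(1) p4])
  have Lm1q: "Legendre (-1) (int q) = -1" by (rule Legendre_minus_one_3mod4[OF q(1) q4])
  have rint: "prime (int r)" using r by simp
  define d where "d = ord r 2"
  have dN: "d dvd p * q" using two_nat ord_divides'[of 2 N r] by (simp add: d_def N_def)
  have dr: "d dvd r - 1"
  proof -
    have "\<not> r dvd 2" using r r2 by (metis prime_nat_iff prime_gt_1_nat two_is_prime_nat primes_dvd_imp_eq)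
    hence "[2 ^ (r - 1) = 1] (mod r)" by (rule fermat_theorem[OF r])
    thus ?thesis using ord_divides'[of 2 "r - 1" r] by (simp add: d_def)
  qed
  have r1pos: "r - 1 > 0" using r1 by simp
  have uiff: "[u = 1] (mod r) \<longleftrightarrow> d dvd q * q'" unfolding u_def d_def using ord_divides'[of 2 "q * q'" r] by simp
  have wiff: "[w = 1] (mod r) \<longleftrightarrow> d dvd p * p'" unfolding w_def d_def using ord_divides'[of 2 "p * p'" r] by simp
  have d1: "d \<noteq> 1"
  proof
    assume "d = 1"
    hence "[2 = 1] (mod r)" using ord_eq_Suc_0_iff[of r 2] by (simp add: d_def)
    thus False using r3 by (simp add: cong_def)
  qed
  show False
  proof (cases "[u = 1] (mod r)")
    case u1: True
    show False
    proof (cases "[w = 1] (mod r)")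
      case w1: True
      have "[(2::int) ^ 1 = (2 ^ (q * q')) ^ (1 mod p) * (2 ^ (p * p')) ^ (1 mod q)] (mod int r)"
        by (rule expo_split[OF p(1) q(1) pq two_int[unfolded N_def] qq pp])
      hence "[(2::int) = int u * int w] (mod int r)" using p(2) q(2) by (simp add: u_def w_def)
      moreover have "[int u * int w = 1 * 1] (mod int r)"
        by (rule cong_mult; rule nat_cong_to_int[THEN cong_trans]) (use u1 w1 in auto)
      ultimately have "[(2::int) = 1] (mod int r)" by (metis cong_trans mult_1)
      hence "int r dvd 1" by (simp add: cong_iff_dvd_diff)
      thus False using r1 by simp
    next
      case w0: False
      have PW0: "[PW = 0] (mod int r)" unfolding PW_def by (rule part_nontriv[OF q(1) r wq w0])
      have GU0: "[GU = 0] (mod int r)" unfolding GU_def by (rule part_triv(2)[OF p(1,2) u1 gnp])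
      have "[PU * PW - (e + GU) * (e + GW) = PU * 0 - (e + 0) * (e + GW)] (mod int r)"
        by (intro cong_diff cong_mult cong_add cong_refl PW0 GU0)
      hence "[- (e * (e + GW)) = 0] (mod int r)" using main by (simp, meson cong_sym cong_trans)
      hence "int r dvd e * (e + GW)" by (simp add: cong_0_iff)
      moreover have "\<not> int r dvd e"
      proof
        assume "int r dvd e" hence "int r dvd e * e" by simp
        thus False using ee r1 by simp
      qed
      ultimately have "int r dvd e + GW" using rint prime_dvd_mult_iff by blast
      hence "[- int q = 1] (mod int r)"
        using root_case[OF _ ee gauss_sq[OF q(1,2) r wq w0 gnq]] Lm1q by (simp add: GW_def)
      hence "int r dvd - int q - 1" by (simp add: cong_iff_dvd_diff)
      hence "int r dvd int (q + 1)" using dvd_minus_iff[of "int r" "- int q - 1"] by simp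
      hence rq: "r dvd q + 1" by (simp only: int_dvd_int_iff)
      have "q dvd d" by (rule ord_case_B[OF p(1) q(1) pq dN uiff[THEN iffD1, OF u1] d1 nq'])
      hence "q dvd r - 1" using dr by (rule dvd_trans)
      hence "q \<le> r - 1" using r1pos by (simp add: dvd_imp_le)
      moreover have "r \<le> q + 1" using rq by (simp add: dvd_imp_le)
      ultimately have "r = q + 1" using r1 by simp
      thus False using rodd q(3) by simp
    qed
  next
    case u0: False
    show False
    proof (cases "[w = 1] (mod r)")
      case w1: True
      have PU0: "[PU = 0] (mod int r)" unfolding PU_def by (rule part_nontriv[OF p(1) r up u0])
      have GW0: "[GW = 0] (mod int r)" unfolding GW_def by (rule part_triv(2)[OF q(1,2) w1 gnq])
      have "[PU * PW - (e + GU) * (e + GW) = 0 * PW - (e + GU) * (e + 0)] (mod int r)"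
        by (intro cong_diff cong_mult cong_add cong_refl PU0 GW0)
      hence "[- ((e + GU) * e) = 0] (mod int r)" using main by (simp, meson cong_sym cong_trans)
      hence "int r dvd (e + GU) * e" by (simp add: cong_0_iff)
      moreover have "\<not> int r dvd e"
      proof
        assume "int r dvd e" hence "int r dvd e * e" by simp
        thus False using ee r1 by simp
      qed
      ultimately have "int r dvd e + GU" using rint prime_dvd_mult_iff by blast
      hence "[int p = 1] (mod int r)"
        using root_case[OF _ ee gauss_sq[OF p(1,2) r up u0 gnp]] Lm1p by (simp add: GU_def)
      hence "int r dvd int (p - 1)" using p(2) by (simp add: cong_iff_dvd_diff of_nat_diff)
      hence rp: "r dvd p - 1" by (simp only: int_dvd_int_iff)
      have "p dvd d"
        by (rule ord_case_B[OF q(1) p(1) pq[symmetric] _ wiff[THEN iffD1, OF w1] d1 np'])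
          (use dN in \<open>simp add: mult.commute\<close>)
      hence "p dvd r - 1" using dr by (rule dvd_trans)
      hence "p \<le> r - 1" using r1pos by (simp add: dvd_imp_le)
      moreover have "r \<le> p - 1" using rp p(2) by (simp add: dvd_imp_le)
      ultimately show False using r1 p(2) by arith
    next
      case w0: False
      have PU0: "[PU = 0] (mod int r)" unfolding PU_def by (rule part_nontriv[OF p(1) r up u0])
      have "[PU * PW - (e + GU) * (e + GW) = 0 * PW - (e + GU) * (e + GW)] (mod int r)"
        by (intro cong_diff cong_mult cong_refl PU0)
      hence "[- ((e + GU) * (e + GW)) = 0] (mod int r)" using main by (simp, meson cong_sym cong_trans)
      hence "int r dvd (e + GU) * (e + GW)" by (simp add: cong_0_iff)
      hence dj: "int r dvd e + GU \<or> int r dvd e + GW" using rint prime_dvd_mult_iff by blast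
      have "p * q dvd d"
        by (rule ord_case_A[OF p(1) q(1) pq dN]) (use u0 w0 uiff wiff in auto)
      hence "p * q dvd r - 1" using dr by (rule dvd_trans)
      hence pqr: "p * q \<le> r - 1" using r1pos by (simp add: dvd_imp_le)
      from dj show False
      proof
        assume "int r dvd e + GU"
        hence "[int p = 1] (mod int r)"
          using root_case[OF _ ee gauss_sq[OF p(1,2) r up u0 gnp]] Lm1p by (simp add: GU_def)
        hence "int r dvd int (p - 1)" using p(2) by (simp add: cong_iff_dvd_diff of_nat_diff)
        hence "r dvd p - 1" by (simp only: int_dvd_int_iff)
        hence "r \<le> p - 1" using p(2) by (simp add: dvd_imp_le)
        moreover have "p \<le> p * q" using q(2) by simp
        ultimately show False using pqr r1 p(2) by arith
      next
        assume "int r dvd e + GW"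
        hence "[- int q = 1] (mod int r)"
          using root_case[OF _ ee gauss_sq[OF q(1,2) r wq w0 gnq]] Lm1q by (simp add: GW_def)
        hence "int r dvd - int q - 1" by (simp add: cong_iff_dvd_diff)
        hence "int r dvd int (q + 1)" using dvd_minus_iff[of "int r" "- int q - 1"] by simp
        hence "r dvd q + 1" by (simp only: int_dvd_int_iff)
        hence "r \<le> q + 1" by (simp add: dvd_imp_le)
        moreover have "3 * q \<le> p * q" using p(2) by simp
        ultimately show False using pqr q(2) r1 by arith
      qed
    qed
  qed
qed


theorem theorem1:
  fixes p q g :: nat
  assumes "prime p" and "prime q" and "p \<noteq> q" and "odd p" and "odd q"
    and "[p = 1] (mod 4)" and "[q = 3] (mod 4)"
    and "gcd (p - 1) (q - 1) = 2"
    and "residue_primroot p g" and "residue_primroot q g"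
    and "\<bar>real q - real p\<bar> < sqrt (real (p * q)) - 1"
  shows "two_adic_complexity (wh_seq p q g) (p * q) \<ge> int (p * q) - int p - int q - 1"
proof -
  define N where "N = p * q"
  define S where "S = (\<Sum>i<N. wh_seq p q g i * 2 ^ i)"
  have p2: "2 < p" using prime_ge_2_nat[OF assms(1)] assms(4) by (cases "p = 2") auto
  have q2: "2 < q" using prime_ge_2_nat[OF assms(2)] assms(5) by (cases "q = 2") auto
  have g1: "gcd ((2::nat) ^ N - 1) S = 1"
  proof (rule ccontr)
    assume "gcd ((2::nat) ^ N - 1) S \<noteq> 1"
    then obtain r where r: "prime r" "r dvd gcd ((2::nat) ^ N - 1) S" using prime_factor_nat by blast
    hence "r dvd 2 ^ (p * q) - 1" "r dvd (\<Sum>i<p*q. wh_seq p q g i * 2 ^ i)"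
      by (auto simp: N_def S_def)
    thus False using key[OF assms(1) p2 assms(4) assms(2) q2 assms(5) assms(3) assms(6) assms(7) assms(8)
        assms(9) assms(10) r(1)] by blast
  qed
  have N1: "1 \<le> (2::nat) ^ N" by simp
  have "real ((2 ^ N - 1) div gcd (2 ^ N - 1) S) + 1 = 2 ^ N"
    using g1 N1 by (simp add: of_nat_diff)
  hence "two_adic_complexity (wh_seq p q g) N = \<lfloor>log 2 ((2::real) ^ N)\<rfloor>"
    unfolding two_adic_complexity_def Let_def S_def[symmetric] by simp
  also have "\<dots> = int N" by (simp add: log_pow_cancel)
  finally show ?thesis unfolding N_def by simp
qed

end
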